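(* Let $\Sigma$ be an alphabet with $|\Sigma|=m$, and let $\pi_1,\pi_2,\pi_3$ be three strings, each a permutation of the symbols of $\Sigma$ (each symbol appears exactly once). Then $$|\mathrm{lcs}(\pi_1,\pi_2)|\cdot|\mathrm{lcs}(\pi_2,\pi_3)|\cdot|\mathrm{lcs}(\pi_3,\pi_1)|\ge m.$$
   Context: $\mathrm{lcs}(x,y)$ denotes a longest common subsequence of strings $x$ and $y$. *)

theory Defs
  imports Main "HOL-Library.Sublist"
begin

definition lcs_len :: "'a list \<Rightarrow> 'a list \<Rightarrow> nat" where
  "lcs_len x y = Max {length z | z. subseq z x \<and> subseq z y}"

end

theory Submission
  imports Defs
begin

lemma lcs_fin: "finite {length z | z. subseq z x \<and> subseq z y}"
proof -
  have "{length z | z. subseq z x \<and> subseq z y} \<subseteq> length ` set (subseqs x)"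
    by auto
  then show ?thesis by (rule finite_subset) simp
qed

lemma lcs_ge: "subseq z x \<Longrightarrow> subseq z y \<Longrightarrow> length z \<le> lcs_len x y"
  unfolding lcs_len_def using lcs_fin by (intro Max_ge) auto

lemma lcs_ex: "\<exists>z. subseq z x \<and> subseq z y \<and> length z = lcs_len x y"
proof -
  have "lcs_len x y \<in> {length z | z. subseq z x \<and> subseq z y}"
    unfolding lcs_len_def using lcs_fin by (intro Max_in) auto
  then show ?thesis by auto
qed

lemma lcs_mono: "subseq x x' \<Longrightarrow> subseq y y' \<Longrightarrow> lcs_len x y \<le> lcs_len x' y'"
proof -
  assume a: "subseq x x'" "subseq y y'"
  obtain z where z: "subseq z x" "subseq z y" "length z = lcs_len x y" using lcs_ex by blast
  have "subseq z x'" using z(1) a(1) by (rule subseq_order.order_trans)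
  moreover have "subseq z y'" using z(2) a(2) by (rule subseq_order.order_trans)
  ultimately have "length z \<le> lcs_len x' y'" by (rule lcs_ge)
  then show ?thesis using z(3) by simp
qed

definition pre :: "'a list \<Rightarrow> 'a \<Rightarrow> 'a list" where
  "pre p x = takeWhile (\<lambda>y. y \<noteq> x) p"

definition F :: "'a list \<Rightarrow> 'a list \<Rightarrow> 'a \<Rightarrow> nat" where
  "F p q x = lcs_len (pre p x @ [x]) (pre q x @ [x])"

lemma pre_decomp: "x \<in> set p \<Longrightarrow> \<exists>r. p = pre p x @ x # r"
proof -
  assume "x \<in> set p"
  then have "dropWhile (\<lambda>y. y \<noteq> x) p \<noteq> []" by (simp add: dropWhile_eq_Nil_conv)
  moreover have "hd (dropWhile (\<lambda>y. y \<noteq> x) p) = x"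
    using \<open>x \<in> set p\<close> hd_dropWhile[of "\<lambda>y. y \<noteq> x" p] calculation by auto
  ultimately have "dropWhile (\<lambda>y. y \<noteq> x) p = x # tl (dropWhile (\<lambda>y. y \<noteq> x) p)"
    by (metis list.collapse)
  then show ?thesis unfolding pre_def by (metis takeWhile_dropWhile_id)
qed

lemma pre_sub: "x \<in> set p \<Longrightarrow> subseq (pre p x @ [x]) p"
proof -
  assume "x \<in> set p"
  from pre_decomp[OF this] obtain r where r: "p = pre p x @ x # r" ..
  have h: "subseq (pre p x @ [x]) (pre p x @ x # r)"
    unfolding subseq_append' by simp
  show ?thesis
    by (rule ssubst[of p "pre p x @ x # r" "\<lambda>t. subseq (pre p x @ [x]) t", OF r]) (rule h)
qed

lemma pre_before: "x \<in> set (pre p y) \<Longrightarrow> subseq (pre p x @ [x]) (pre p y)"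
proof -
  assume h: "x \<in> set (pre p y)"
  have "pre p x = takeWhile (\<lambda>z. z \<noteq> x) p" unfolding pre_def ..
  also have "\<dots> = takeWhile (\<lambda>z. z \<noteq> x) (pre p y @ dropWhile (\<lambda>z. z \<noteq> y) p)"
    unfolding pre_def by simp
  also have "\<dots> = takeWhile (\<lambda>z. z \<noteq> x) (pre p y)"
    using h by (intro takeWhile_append1) auto
  finally have "pre p x = takeWhile (\<lambda>z. z \<noteq> x) (pre p y)" .
  then have "pre p x = pre (pre p y) x" by (simp only: pre_def)
  then show ?thesis using pre_sub[OF h] by simp
qed

lemma pre_total: "x \<in> set p \<Longrightarrow> y \<in> set p \<Longrightarrow> x \<noteq> y \<Longrightarrow> x \<in> set (pre p y) \<or> y \<in> set (pre p x)"
proof -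
  assume a: "x \<in> set p" "y \<in> set p" "x \<noteq> y"
  show ?thesis
  proof (cases "x \<in> set (pre p y)")
    case False
    obtain r where r: "p = pre p y @ y # r" using pre_decomp[OF a(2)] by blast
    have "pre p x = takeWhile (\<lambda>z. z \<noteq> x) p" unfolding pre_def ..
    also have "\<dots> = takeWhile (\<lambda>z. z \<noteq> x) (pre p y @ y # r)"
      using r by (rule arg_cong)
    also have "\<dots> = pre p y @ takeWhile (\<lambda>z. z \<noteq> x) (y # r)"
      using False by (intro takeWhile_append2) auto
    also have "\<dots> = pre p y @ y # takeWhile (\<lambda>z. z \<noteq> x) r"
      using a(3) by simp
    finally have "pre p x = pre p y @ y # takeWhile (\<lambda>z. z \<noteq> x) r" .
    then show ?thesis by simp
  qed simp
qed

lemma F_ge1: "x \<in> set p \<Longrightarrow> x \<in> set q \<Longrightarrow> 1 \<le> F p q x"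
proof -
  have "length [x] \<le> F p q x" unfolding F_def
  proof (rule lcs_ge)
    show "subseq [x] (pre p x @ [x])" by (rule list_emb_append2) simp
    show "subseq [x] (pre q x @ [x])" by (rule list_emb_append2) simp
  qed
  then show ?thesis by simp
qed

lemma F_le: "x \<in> set p \<Longrightarrow> x \<in> set q \<Longrightarrow> F p q x \<le> lcs_len p q"
  unfolding F_def by (intro lcs_mono pre_sub)

lemma F_less: "x \<in> set (pre p y) \<Longrightarrow> x \<in> set (pre q y) \<Longrightarrow> F p q x < F p q y"
proof -
  assume a: "x \<in> set (pre p y)" "x \<in> set (pre q y)"
  obtain z where z: "subseq z (pre p x @ [x])" "subseq z (pre q x @ [x])" "length z = F p q x"
    using lcs_ex unfolding F_def by blast
  have "subseq (z @ [y]) (pre p y @ [y])"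
    using z(1) pre_before[OF a(1)] by (intro list_emb_append_mono) auto
  moreover have "subseq (z @ [y]) (pre q y @ [y])"
    using z(2) pre_before[OF a(2)] by (intro list_emb_append_mono) auto
  ultimately have "length (z @ [y]) \<le> F p q y" unfolding F_def by (rule lcs_ge)
  then show ?thesis using z(3) by simp
qed

lemma F_neq:
  assumes "x \<in> set p" "y \<in> set p" "x \<in> set q" "y \<in> set q" "x \<noteq> y"
    and "(x \<in> set (pre p y)) = (x \<in> set (pre q y))"
  shows "F p q x \<noteq> F p q y"
proof (cases "x \<in> set (pre p y)")
  case True
  then show ?thesis using F_less[of x p y q] assms by auto
next
  case False
  then have "y \<in> set (pre p x)" "y \<in> set (pre q x)"
    using pre_total assms by metis+
  then show ?thesis using F_less[of y p x q] by auto
qed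

theorem mainTheorem4:
  fixes \<Sigma> :: "'a set" and p1 p2 p3 :: "'a list"
  assumes "finite \<Sigma>"
    and "distinct p1" and "set p1 = \<Sigma>"
    and "distinct p2" and "set p2 = \<Sigma>"
    and "distinct p3" and "set p3 = \<Sigma>"
  shows "lcs_len p1 p2 * lcs_len p2 p3 * lcs_len p3 p1 \<ge> card \<Sigma>"
proof -
  define g where "g x = (F p1 p2 x, F p2 p3 x, F p3 p1 x)" for x
  have inj: "inj_on g \<Sigma>"
  proof (rule inj_onI)
    fix x y assume xy: "x \<in> \<Sigma>" "y \<in> \<Sigma>" "g x = g y"
    show "x = y"
    proof (rule ccontr)
      assume ne: "x \<noteq> y"
      have "(x \<in> set (pre p1 y)) = (x \<in> set (pre p2 y)) \<or>
            (x \<in> set (pre p2 y)) = (x \<in> set (pre p3 y)) \<or>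
            (x \<in> set (pre p3 y)) = (x \<in> set (pre p1 y))" by blast
      then show False
        using F_neq[of x p1 y p2] F_neq[of x p2 y p3] F_neq[of x p3 y p1] xy ne assms
        unfolding g_def by auto
    qed
  qed
  have "g ` \<Sigma> \<subseteq> {1..lcs_len p1 p2} \<times> {1..lcs_len p2 p3} \<times> {1..lcs_len p3 p1}"
    using F_ge1 F_le assms unfolding g_def by fastforce
  then have "card (g ` \<Sigma>) \<le> card ({1..lcs_len p1 p2} \<times> {1..lcs_len p2 p3} \<times> {1..lcs_len p3 p1})"
    by (intro card_mono) auto
  then show ?thesis using card_image[OF inj] by (simp add: card_cartesian_product)
qed

end
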